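(* Consider a combinatorial auction with $2$ bidders and $2$ items $a,b$, where both bidders have monotone subadditive valuations. Let $\mathcal M_2$ be the randomized mechanism that selects a bidder $i$ uniformly at random and an item $j$ uniformly at random, allocates item $j$ to bidder $i$, and then runs an ascending second-price auction for the remaining item among both bidders. Then $\mathcal M_2$ achieves a $\frac{4}{3}$-approximation to the optimal social welfare: on every instance its expected welfare under truthful play is at least $\frac34\mathrm{OPT}$.
   Context: A valuation $v:2^{\{a,b\}}\to\mathbb{R}_{\ge0}$ is monotone if $v(T)\le v(T')$ whenever $T\subseteq T'$, and subadditive if $v(T\cup T')\le v(T)+v(T')$ for all $T,T'$. In the auction for the remaining item, each bidder bids her marginal value for that item given the bundle she already holds; the highest bidder wins. $\mathrm{OPT}$ is the maximum of $v_1(T_1)+v_2(T_2)$ over disjoint $T_1,T_2\subseteq\{a,b\}$. *)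

theory Defs
  imports Complex_Main
begin

datatype item = ItemA | ItemB

lemma UNIV_item: "(UNIV :: item set) = {ItemA, ItemB}"
  using item.exhaust by auto

instance item :: finite
  by standard (simp add: UNIV_item)

definition other_item :: "item \<Rightarrow> item" where
  "other_item j = (if j = ItemA then ItemB else ItemA)"

definition nonneg_val :: "(item set \<Rightarrow> real) \<Rightarrow> bool" where
  "nonneg_val v \<longleftrightarrow> (\<forall>T. 0 \<le> v T)"

definition monotone_val :: "(item set \<Rightarrow> real) \<Rightarrow> bool" where
  "monotone_val v \<longleftrightarrow> (\<forall>T T'. T \<subseteq> T' \<longrightarrow> v T \<le> v T')"

definition subadditive_val :: "(item set \<Rightarrow> real) \<Rightarrow> bool" where
  "subadditive_val v \<longleftrightarrow> (\<forall>T T'. v (T \<union> T') \<le> v T + v T')"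

definition OPT :: "(item set \<Rightarrow> real) \<Rightarrow> (item set \<Rightarrow> real) \<Rightarrow> real" where
  "OPT v1 v2 = Max ((\<lambda>(T1, T2). v1 T1 + v2 T2) ` {(T1, T2). T1 \<inter> T2 = {}})"

text \<open>Welfare when item j is given to bidder vi (the other bidder being vk) and the
  remaining item j' is sold to the higher marginal bidder under truthful bidding.
  Ties go to vi (tie-breaking does not affect welfare).\<close>
definition round_welfare ::
  "(item set \<Rightarrow> real) \<Rightarrow> (item set \<Rightarrow> real) \<Rightarrow> item \<Rightarrow> real" where
  "round_welfare vi vk j =
     (let j' = other_item j;
          bi = vi {j, j'} - vi {j};
          bk = vk {j'} - vk {}
      in if bk \<le> bi then vi {j, j'} + vk {} else vi {j} + vk {j'})"

definition M2_welfare :: "(item set \<Rightarrow> real) \<Rightarrow> (item set \<Rightarrow> real) \<Rightarrow> real" where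
  "M2_welfare v1 v2 =
     (1/4) * (\<Sum>j\<in>{ItemA, ItemB}. round_welfare v1 v2 j + round_welfare v2 v1 j)"

end

theory Submission
  imports Defs
begin

lemma item_cases: "x = ItemA \<or> x = ItemB"
  by (cases x) simp_all

lemma item_subsets: "T = {} \<or> T = {ItemA} \<or> T = {ItemB} \<or> T = {ItemA, ItemB}"
proof (cases "ItemA \<in> T")
  case a: True
  show ?thesis
  proof (cases "ItemB \<in> T")
    case True
    have "T = {ItemA, ItemB}"
    proof (rule set_eqI)
      fix x show "x \<in> T \<longleftrightarrow> x \<in> {ItemA, ItemB}" using item_cases[of x] a True by auto
    qed
    thus ?thesis by (rule disjI2[OF disjI2[OF disjI2]])
  next
    case False
    have "T = {ItemA}"
    proof (rule set_eqI)
      fix x show "x \<in> T \<longleftrightarrow> x \<in> {ItemA}" using item_cases[of x] a False by auto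
    qed
    thus ?thesis by (rule disjI2[OF disjI1])
  qed
next
  case a: False
  show ?thesis
  proof (cases "ItemB \<in> T")
    case True
    have "T = {ItemB}"
    proof (rule set_eqI)
      fix x show "x \<in> T \<longleftrightarrow> x \<in> {ItemB}" using item_cases[of x] a True by auto
    qed
    thus ?thesis by (rule disjI2[OF disjI2[OF disjI1]])
  next
    case False
    have "T = {}"
    proof (rule set_eqI)
      fix x show "x \<in> T \<longleftrightarrow> x \<in> {}" using item_cases[of x] a False by auto
    qed
    thus ?thesis by (rule disjI1)
  qed
qed

lemma rw: "round_welfare vi vk j = max (vi {j, other_item j} + vk {}) (vi {j} + vk {other_item j})"
  unfolding round_welfare_def Let_def max_def by auto

lemma arith_lin:
  fixes e1 a1 b1 c1 e2 a2 b2 c2 o4 M1 M2 M3 M4 :: real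
  assumes "0 \<le> e1" "e1 \<le> a1" "e1 \<le> b1" "a1 \<le> c1" "b1 \<le> c1" "c1 \<le> a1 + b1"
      and "0 \<le> e2" "e2 \<le> a2" "e2 \<le> b2" "a2 \<le> c2" "b2 \<le> c2" "c2 \<le> a2 + b2"
      and "c1 + e2 \<le> M1" "a1 + b2 \<le> M1" "c2 + e1 \<le> M2" "a2 + b1 \<le> M2"
      and "c1 + e2 \<le> M3" "b1 + a2 \<le> M3" "c2 + e1 \<le> M4" "b2 + a1 \<le> M4"
      and "o4 = c1 + e2 \<or> o4 = a1 + b2 \<or> o4 = b1 + a2 \<or> o4 = e1 + c2"
  shows "3 * o4 \<le> M1 + M2 + M3 + M4"
  using assms(21)
proof (elim disjE)
  assume "o4 = c1 + e2" thus ?thesis using assms(13,17,16,20,6,7,8,9) by linarith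
next
  assume "o4 = a1 + b2" thus ?thesis using assms(14,20,15,17,4,11,1,7) by linarith
next
  assume "o4 = b1 + a2" thus ?thesis using assms(16,18,13,19,5,10,1,7) by linarith
next
  assume "o4 = e1 + c2" thus ?thesis using assms(15,19,14,18,12,1,2,3) by linarith
qed

lemma max4_cases:
  fixes p q r s :: real
  shows "max (max p q) (max r s) = p \<or> max (max p q) (max r s) = q \<or>
         max (max p q) (max r s) = r \<or> max (max p q) (max r s) = s"
  unfolding max_def by auto

lemma arith_core:
  fixes e1 a1 b1 c1 e2 a2 b2 c2 :: real
  assumes "0 \<le> e1" "e1 \<le> a1" "e1 \<le> b1" "a1 \<le> c1" "b1 \<le> c1" "c1 \<le> a1 + b1"
      and "0 \<le> e2" "e2 \<le> a2" "e2 \<le> b2" "a2 \<le> c2" "b2 \<le> c2" "c2 \<le> a2 + b2"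
      and "o4 = max (max (c1 + e2) (a1 + b2)) (max (b1 + a2) (e1 + c2))"
  shows "3 * o4 \<le> max (c1 + e2) (a1 + b2) + max (c2 + e1) (a2 + b1)
                  + max (c1 + e2) (b1 + a2) + max (c2 + e1) (b2 + a1)"
  apply (rule arith_lin[OF assms(1-12)])
  apply (rule max.cobounded1 max.cobounded2)+
  using max4_cases assms(13) apply metis
  done

lemma pair_bound:
  fixes v1 v2 :: "item set \<Rightarrow> real"
  assumes mono1: "monotone_val v1" and mono2: "monotone_val v2" and d: "T1 \<inter> T2 = {}"
  shows "v1 T1 + v2 T2 \<le> max (max (v1 {ItemA, ItemB} + v2 {}) (v1 {ItemA} + v2 {ItemB}))
                               (max (v1 {ItemB} + v2 {ItemA}) (v1 {} + v2 {ItemA, ItemB}))"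
proof -
  have m1: "\<And>S T. S \<subseteq> T \<Longrightarrow> v1 S \<le> v1 T" using mono1 unfolding monotone_val_def by auto
  have m2: "\<And>S T. S \<subseteq> T \<Longrightarrow> v2 S \<le> v2 T" using mono2 unfolding monotone_val_def by auto
  have U: "\<And>T. T \<subseteq> {ItemA, ItemB}" using UNIV_item by blast
  have A: "v1 T1 + v2 T2 \<le> v1 {ItemA, ItemB} + v2 {}" if h: "T2 = {}"
  proof -
    have "v1 T1 \<le> v1 {ItemA, ItemB}" by (rule m1[OF U])
    thus ?thesis unfolding h by simp
  qed
  have B: "v1 T1 + v2 T2 \<le> v1 {} + v2 {ItemA, ItemB}" if h: "T1 = {}"
  proof -
    have "v2 T2 \<le> v2 {ItemA, ItemB}" by (rule m2[OF U])
    thus ?thesis unfolding h by simp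
  qed
  have C: "v1 T1 + v2 T2 \<le> v1 {ItemA} + v2 {ItemB}" if h: "T1 = {ItemA}"
  proof -
    have "T2 \<subseteq> {ItemB}" using d h item_subsets[of T2] by auto
    hence "v2 T2 \<le> v2 {ItemB}" by (rule m2)
    thus ?thesis unfolding h by simp
  qed
  have D: "v1 T1 + v2 T2 \<le> v1 {ItemB} + v2 {ItemA}" if h: "T1 = {ItemB}"
  proof -
    have "T2 \<subseteq> {ItemA}" using d h item_subsets[of T2] by auto
    hence "v2 T2 \<le> v2 {ItemA}" by (rule m2)
    thus ?thesis unfolding h by simp
  qed
  have E: "T2 = {}" if "T1 = {ItemA, ItemB}" using that d item_subsets[of T2] by auto
  let ?p = "v1 {ItemA, ItemB} + v2 {}" and ?q = "v1 {ItemA} + v2 {ItemB}"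
    and ?r = "v1 {ItemB} + v2 {ItemA}" and ?s = "v1 {} + v2 {ItemA, ItemB}"
  have mx: "?p \<le> max (max ?p ?q) (max ?r ?s)" "?q \<le> max (max ?p ?q) (max ?r ?s)"
    "?r \<le> max (max ?p ?q) (max ?r ?s)" "?s \<le> max (max ?p ?q) (max ?r ?s)" by auto
  from item_subsets[of T1] show ?thesis
  proof (elim disjE)
    assume h: "T1 = {}" show ?thesis by (rule order_trans[OF B[OF h] mx(4)])
  next
    assume h: "T1 = {ItemA}" show ?thesis by (rule order_trans[OF C[OF h] mx(2)])
  next
    assume h: "T1 = {ItemB}" show ?thesis by (rule order_trans[OF D[OF h] mx(3)])
  next
    assume h: "T1 = {ItemA, ItemB}" show ?thesis by (rule order_trans[OF A[OF E[OF h]] mx(1)])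
  qed
qed

theorem claimB3:
  fixes v1 v2 :: "item set \<Rightarrow> real"
  assumes "nonneg_val v1" "monotone_val v1" "subadditive_val v1"
      and "nonneg_val v2" "monotone_val v2" "subadditive_val v2"
  shows "M2_welfare v1 v2 \<ge> (3/4) * OPT v1 v2"
proof -
  let ?S = "{(T1, T2). T1 \<inter> T2 = {}} :: (item set \<times> item set) set"
  define o4 where "o4 = max (max (v1 {ItemA, ItemB} + v2 {}) (v1 {ItemA} + v2 {ItemB}))
                               (max (v1 {ItemB} + v2 {ItemA}) (v1 {} + v2 {ItemA, ItemB}))"
  have ba: "{ItemB, ItemA} = {ItemA, ItemB}" by auto
  have m1: "v1 {} \<le> v1 {ItemA}" "v1 {} \<le> v1 {ItemB}" "v1 {ItemA} \<le> v1 {ItemA, ItemB}"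
       "v1 {ItemB} \<le> v1 {ItemA, ItemB}" "0 \<le> v1 {}"
    using assms(1,2) unfolding monotone_val_def nonneg_val_def by auto
  have m2: "v2 {} \<le> v2 {ItemA}" "v2 {} \<le> v2 {ItemB}" "v2 {ItemA} \<le> v2 {ItemA, ItemB}"
       "v2 {ItemB} \<le> v2 {ItemA, ItemB}" "0 \<le> v2 {}"
    using assms(4,5) unfolding monotone_val_def nonneg_val_def by auto
  have s1: "v1 {ItemA, ItemB} \<le> v1 {ItemA} + v1 {ItemB}"
    using assms(3) unfolding subadditive_val_def
    by (metis insert_is_Un)
  have s2: "v2 {ItemA, ItemB} \<le> v2 {ItemA} + v2 {ItemB}"
    using assms(6) unfolding subadditive_val_def
    by (metis insert_is_Un)
  have o4': "o4 = max (max (v1 {ItemA, ItemB} + v2 {}) (v1 {ItemA} + v2 {ItemB}))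
                  (max (v1 {ItemB} + v2 {ItemA}) (v1 {} + v2 {ItemA, ItemB}))"
    by (simp add: o4_def)
  have W: "4 * M2_welfare v1 v2 = 
      max (v1 {ItemA, ItemB} + v2 {}) (v1 {ItemA} + v2 {ItemB})
    + max (v2 {ItemA, ItemB} + v1 {}) (v2 {ItemA} + v1 {ItemB})
    + max (v1 {ItemA, ItemB} + v2 {}) (v1 {ItemB} + v2 {ItemA})
    + max (v2 {ItemA, ItemB} + v1 {}) (v2 {ItemB} + v1 {ItemA})"
    unfolding M2_welfare_def rw other_item_def by (simp add: ba)
  note core0 = arith_core[OF m1(5,1,2,3,4) s1 m2(5,1,2,3,4) s2 o4']
  have core: "3 * o4 \<le> 4 * M2_welfare v1 v2"
    unfolding W by (rule core0)
  have key: "v1 T1 + v2 T2 \<le> o4" if "T1 \<inter> T2 = {}" for T1 T2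
    unfolding o4_def using pair_bound[OF assms(2,5) that] .
  have fin: "finite ?S" by simp
  have ne: "?S \<noteq> {}" by auto
  have "Max ((\<lambda>(T1, T2). v1 T1 + v2 T2) ` ?S) \<le> o4"
  proof (subst Max_le_iff)
    show "finite ((\<lambda>(T1, T2). v1 T1 + v2 T2) ` ?S)" using fin by blast
    show "(\<lambda>(T1, T2). v1 T1 + v2 T2) ` ?S \<noteq> {}" using ne by blast
    show "\<forall>a\<in>(\<lambda>(T1, T2). v1 T1 + v2 T2) ` ?S. a \<le> o4"
    proof
      fix a assume "a \<in> (\<lambda>(T1, T2). v1 T1 + v2 T2) ` ?S"
      then obtain T1 T2 where "a = v1 T1 + v2 T2" "T1 \<inter> T2 = {}" by auto
      with key[OF this(2)] show "a \<le> o4" by simp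
    qed
  qed
  hence "OPT v1 v2 \<le> o4" unfolding OPT_def .
  thus ?thesis using core by linarith
qed

end
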